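(* Let $R$ be a commutative ring, $M$ an $R$-module, $y_1,\ldots,y_r\in R$, and let $i>0$ be an integer. Assume that for all $A\subseteq\{1,\ldots,r\}$ and all $s$ with $\max A<s\le r$ one has $y_sH_i(y_A;M)=0$. Then for all $A\subseteq\{1,\ldots,r\}$ the canonical map $$\partial\colon H_{i+1}(y_A;M)\to\bigoplus_{j\in A}H_i(y_{A_j};M),\quad \partial([z])=(\partial_j([z]))_{j\in A},$$ is injective.
   Context: For $A\subseteq\{1,\ldots,r\}$, $y_A=\{y_j:j\in A\}$ and for $j\in A$, $A_j=A\setminus\{j\}$; $H_i(y_A;M)$ is the Koszul homology of $M$ with respect to $y_A$, the Koszul complex having exterior basis $e_j$, $j\in A$. The map $\partial_j\colon H_{i+1}(y_A;M)\to H_i(y_{A_j};M)$ is defined as follows: a cycle $z\in Z_{i+1}(y_A;M)$ can be uniquely written $z=z_0+z_1\wedge e_j$ with $z_0\in K_{i+1}(y_{A_j};M)$ and $z_1\in Z_i(y_{A_j};M)$, and $\partial_j([z])=[z_1]$ (it is the connecting map in the long exact sequence $\cdots\to H_{i+1}(y_{A_j};M)\to H_{i+1}(y_A;M)\to H_i(y_{A_j};M)\xrightarrow{y_j}\cdots$). *)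

theory Defs
  imports Complex_Main
begin

text \<open>A chain of degree i is a family of coefficients
  c S (the coefficient of e_S = e_{s_1} wedge ... wedge e_{s_k}, s_1 < ... < s_k),
  supported on subsets S of A with card S = i.\<close>

definition kchain :: "nat set \<Rightarrow> nat \<Rightarrow> (nat set \<Rightarrow> 'b::ab_group_add) set" where
  "kchain A i = {c. \<forall>S. c S \<noteq> 0 \<longrightarrow> S \<subseteq> A \<and> card S = i}"

text \<open>Koszul differential: d(m e_S) = sum over j in S of (-1)^(number of k in S with k < j) y_j m e_(S - {j}).\<close>
definition kdiff :: "('a::comm_ring_1 \<Rightarrow> 'b::ab_group_add \<Rightarrow> 'b) \<Rightarrow> (nat \<Rightarrow> 'a) \<Rightarrow> nat set
    \<Rightarrow> (nat set \<Rightarrow> 'b) \<Rightarrow> (nat set \<Rightarrow> 'b)" where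
  "kdiff scale y A c = (\<lambda>T. \<Sum>j\<in>A - T. scale ((-1) ^ card {k\<in>T. k < j} * y j) (c (insert j T)))"

definition kcycles :: "('a::comm_ring_1 \<Rightarrow> 'b::ab_group_add \<Rightarrow> 'b) \<Rightarrow> (nat \<Rightarrow> 'a) \<Rightarrow> nat set
    \<Rightarrow> nat \<Rightarrow> (nat set \<Rightarrow> 'b) set" where
  "kcycles scale y A i = {c \<in> kchain A i. kdiff scale y A c = (\<lambda>_. 0)}"

definition kbounds :: "('a::comm_ring_1 \<Rightarrow> 'b::ab_group_add \<Rightarrow> 'b) \<Rightarrow> (nat \<Rightarrow> 'a) \<Rightarrow> nat set
    \<Rightarrow> nat \<Rightarrow> (nat set \<Rightarrow> 'b) set" where
  "kbounds scale y A i = kdiff scale y A ` kchain A (Suc i)"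

definition kclass :: "('a::comm_ring_1 \<Rightarrow> 'b::ab_group_add \<Rightarrow> 'b) \<Rightarrow> (nat \<Rightarrow> 'a) \<Rightarrow> nat set
    \<Rightarrow> nat \<Rightarrow> (nat set \<Rightarrow> 'b) \<Rightarrow> (nat set \<Rightarrow> 'b) set" where
  "kclass scale y A i z = {(\<lambda>S. z S + b S) | b. b \<in> kbounds scale y A i}"

definition khom :: "('a::comm_ring_1 \<Rightarrow> 'b::ab_group_add \<Rightarrow> 'b) \<Rightarrow> (nat \<Rightarrow> 'a) \<Rightarrow> nat set
    \<Rightarrow> nat \<Rightarrow> (nat set \<Rightarrow> 'b) set set" where
  "khom scale y A i = kclass scale y A i ` kcycles scale y A i"

text \<open>Writing z = z_0 + z_1 wedge e_j with z_1 supported on subsets of A - {j}: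
  since e_T wedge e_j = (-1)^(number of k in T with k > j) e_(insert j T),
  the coefficient of z_1 at T is (-1)^(...) times z (insert j T).\<close>
definition kpart :: "('a::comm_ring_1 \<Rightarrow> 'b::ab_group_add \<Rightarrow> 'b) \<Rightarrow> nat \<Rightarrow> nat set
    \<Rightarrow> (nat set \<Rightarrow> 'b) \<Rightarrow> (nat set \<Rightarrow> 'b)" where
  "kpart scale j A z = (\<lambda>T. if T \<subseteq> A - {j}
       then scale ((-1) ^ card {k\<in>T. j < k}) (z (insert j T)) else 0)"

definition kconn :: "('a::comm_ring_1 \<Rightarrow> 'b::ab_group_add \<Rightarrow> 'b) \<Rightarrow> (nat \<Rightarrow> 'a) \<Rightarrow> nat set
    \<Rightarrow> nat \<Rightarrow> nat \<Rightarrow> (nat set \<Rightarrow> 'b) set \<Rightarrow> (nat set \<Rightarrow> 'b) set" where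
  "kconn scale y A i j h = kclass scale y (A - {j}) i
     (kpart scale j A (SOME z. z \<in> kcycles scale y A (Suc i) \<and> kclass scale y A (Suc i) z = h))"

definition kbd :: "('a::comm_ring_1 \<Rightarrow> 'b::ab_group_add \<Rightarrow> 'b) \<Rightarrow> (nat \<Rightarrow> 'a) \<Rightarrow> nat set
    \<Rightarrow> nat \<Rightarrow> (nat set \<Rightarrow> 'b) set \<Rightarrow> (nat \<Rightarrow> (nat set \<Rightarrow> 'b) set)" where
  "kbd scale y A i h = (\<lambda>j. if j \<in> A then kconn scale y A i j h else undefined)"

end

theory Submission
  imports Defs
begin

context module
begin


lemma kdiff_add: "kdiff scale y A (\<lambda>S. f S + g S) T = kdiff scale y A f T + kdiff scale y A g T"
  by (simp add: kdiff_def scale_right_distrib sum.distrib)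

lemma kdiff_diff: "kdiff scale y A (\<lambda>S. f S - g S) T = kdiff scale y A f T - kdiff scale y A g T"
  by (simp add: kdiff_def scale_right_diff_distrib sum_subtractf)

lemma kdiff_scale: "kdiff scale y A (\<lambda>S. scale c (f S)) T = scale c (kdiff scale y A f T)"
  by (simp add: kdiff_def scale_sum_right mult.commute)

lemma kdiff_zero: "kdiff scale y A (\<lambda>_. 0) = (\<lambda>_. 0)"
  by (simp add: kdiff_def)

lemma kdiff_chain:
  assumes "c \<in> kchain A (Suc n)" shows "kdiff scale y A c \<in> kchain A n"
  unfolding kchain_def
proof (intro CollectI allI impI)
  fix T assume "kdiff scale y A c T \<noteq> 0"
  then obtain l where l: "l \<in> A - T" "scale ((-1) ^ card {k\<in>T. k < l} * y l) (c (insert l T)) \<noteq> 0"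
    unfolding kdiff_def by (meson sum.neutral)
  hence "c (insert l T) \<noteq> 0" by auto
  hence "insert l T \<subseteq> A \<and> card (insert l T) = Suc n" using assms by (auto simp: kchain_def)
  moreover have "finite T" using calculation by (metis card.infinite finite_insert nat.distinct(1))
  ultimately show "T \<subseteq> A \<and> card T = n" using l by auto
qed

lemma kdiff_cong:
  assumes "\<And>S. S \<subseteq> A \<Longrightarrow> f S = g S" "T \<subseteq> A"
  shows "kdiff scale y A f T = kdiff scale y A g T"
  unfolding kdiff_def using assms by (intro sum.cong) auto

lemma kdiff_outside':
  assumes "\<And>S. \<not> S \<subseteq> A \<Longrightarrow> c S = 0" "\<not> T \<subseteq> A"
  shows "kdiff scale y A c T = 0"
  unfolding kdiff_def using assms by (intro sum.neutral) auto

lemma kdiff_outside: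
  assumes "c \<in> kchain A n" "\<not> T \<subseteq> A"
  shows "kdiff scale y A c T = 0"
  using assms by (intro kdiff_outside') (auto simp: kchain_def)

lemma kdiff_restrict:
  assumes "finite A" "B \<subseteq> A" "c \<in> kchain B n"
  shows "kdiff scale y A c = kdiff scale y B c"
proof
  fix T
  show "kdiff scale y A c T = kdiff scale y B c T"
    unfolding kdiff_def
  proof (rule sum.mono_neutral_right)
    show "finite (A - T)" using assms by auto
    show "B - T \<subseteq> A - T" using assms by auto
    show "\<forall>l\<in>A - T - (B - T). scale ((-1) ^ card {k\<in>T. k < l} * y l) (c (insert l T)) = 0"
      using assms(3) by (auto simp: kchain_def) (metis insertI1 scale_zero_right subsetD)
  qed
qed

lemma kdiff_split_max:
  assumes "finite C" "j \<in> C" "\<forall>a\<in>C-{j}. a < j" "T \<subseteq> C - {j}"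
  shows "kdiff scale y C c T = kdiff scale y (C-{j}) c T + scale ((-1)^card T * y j) (c (insert j T))"
proof -
  have e: "C - T = insert j (C - {j} - T)" using assms by auto
  have "{k\<in>T. k < j} = T" using assms by auto
  thus ?thesis unfolding kdiff_def e using assms by (subst sum.insert) (auto simp: add.commute)
qed

lemma kdiff_split_max2:
  assumes "finite C" "j \<in> C" "\<forall>a\<in>C-{j}. a < j" "T \<subseteq> C - {j}"
  shows "kdiff scale y C c (insert j T) = kdiff scale y (C-{j}) (\<lambda>S. c (insert j S)) T"
proof -
  have e: "C - insert j T = C - {j} - T" by auto
  have h: "{k\<in>insert j T. k < l} = {k\<in>T. k < l}" if "l \<in> C - {j} - T" for l
  proof -
    have "l < j" using assms(3) that by auto
    thus ?thesis by auto
  qed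
  show ?thesis unfolding kdiff_def e
    by (rule sum.cong[OF refl]) (simp only: h insert_commute)
qed




lemma kchain_fin: "c \<in> kchain A (Suc n) \<Longrightarrow> c S \<noteq> 0 \<Longrightarrow> S \<subseteq> A \<and> card S = Suc n \<and> finite S"
  by (auto simp: kchain_def intro: card_ge_0_finite)

lemma kpart_chain:
  assumes "c \<in> kchain A (Suc n)" shows "kpart scale k A c \<in> kchain (A - {k}) n"
  unfolding kchain_def
proof (intro CollectI allI impI)
  fix T assume h: "kpart scale k A c T \<noteq> 0"
  have T: "T \<subseteq> A - {k}"
  proof (rule ccontr)
    assume "\<not> T \<subseteq> A - {k}" thus False using h by (simp add: kpart_def)
  qed
  have "c (insert k T) \<noteq> 0"
  proof
    assume "c (insert k T) = 0" thus False using h T by (simp add: kpart_def)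
  qed
  hence c1: "card (insert k T) = Suc n" and c2: "finite T"
    using kchain_fin[OF assms, of "insert k T"] by auto
  have "k \<notin> T" using T by auto
  hence "card T = n" using c1 c2 by simp
  thus "T \<subseteq> A - {k} \<and> card T = n" using T by simp
qed

lemma kpart_diff: "kpart scale k A (\<lambda>S. f S - g S) T = kpart scale k A f T - kpart scale k A g T"
  by (simp add: kpart_def scale_right_diff_distrib)

lemma kpart_mono:
  assumes "c \<in> kchain B n" "B \<subseteq> A"
  shows "kpart scale k A c = kpart scale k B c"
proof
  fix T
  show "kpart scale k A c T = kpart scale k B c T"
  proof (cases "T \<subseteq> B - {k}")
    case True thus ?thesis using assms by (auto simp: kpart_def)
  next
    case False
    hence "c (insert k T) = 0 \<or> \<not> T \<subseteq> A - {k}" using assms by (auto simp: kchain_def)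
    thus ?thesis using False by (auto simp: kpart_def)
  qed
qed

lemma card_insert_less:
  assumes "finite T" "k \<notin> T"
  shows "card {m\<in>insert k T. P m} = card {m\<in>T. P m} + (if P k then 1 else 0)"
proof -
  have "{m\<in>insert k T. P m} = (if P k then insert k {m\<in>T. P m} else {m\<in>T. P m})" by auto
  thus ?thesis using assms by auto
qed




lemma zero_kchain: "(\<lambda>_. 0) \<in> kchain A n" by (simp add: kchain_def)

lemma zero_kbounds: "(\<lambda>_. 0) \<in> kbounds scale y A n"
  unfolding kbounds_def using kdiff_zero zero_kchain by (metis image_eqI)

lemma kchain_add: assumes "f \<in> kchain A n" "g \<in> kchain A n" shows "(\<lambda>S. f S + g S) \<in> kchain A n"
  unfolding kchain_def
proof (intro CollectI allI impI)
  fix S assume "f S + g S \<noteq> 0"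
  hence "f S \<noteq> 0 \<or> g S \<noteq> 0" by auto
  thus "S \<subseteq> A \<and> card S = n" using assms by (auto simp: kchain_def)
qed

lemma kchain_diff: assumes "f \<in> kchain A n" "g \<in> kchain A n" shows "(\<lambda>S. f S - g S) \<in> kchain A n"
  unfolding kchain_def
proof (intro CollectI allI impI)
  fix S assume "f S - g S \<noteq> 0"
  hence "f S \<noteq> 0 \<or> g S \<noteq> 0" by auto
  thus "S \<subseteq> A \<and> card S = n" using assms by (auto simp: kchain_def)
qed

lemma kchain_scale: assumes "f \<in> kchain A n" shows "(\<lambda>S. scale c (f S)) \<in> kchain A n"
  unfolding kchain_def
proof (intro CollectI allI impI)
  fix S assume "scale c (f S) \<noteq> 0"
  hence "f S \<noteq> 0" by auto
  thus "S \<subseteq> A \<and> card S = n" using assms by (auto simp: kchain_def)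
qed

lemma kchain_mono: "f \<in> kchain B n \<Longrightarrow> B \<subseteq> A \<Longrightarrow> f \<in> kchain A n"
  unfolding kchain_def by blast

lemma kbounds_add: "f \<in> kbounds scale y A n \<Longrightarrow> g \<in> kbounds scale y A n \<Longrightarrow> (\<lambda>S. f S + g S) \<in> kbounds scale y A n"
proof -
  assume "f \<in> kbounds scale y A n" "g \<in> kbounds scale y A n"
  then obtain p q where "p \<in> kchain A (Suc n)" "q \<in> kchain A (Suc n)" "f = kdiff scale y A p" "g = kdiff scale y A q"
    by (auto simp: kbounds_def)
  thus ?thesis unfolding kbounds_def
    by (intro image_eqI[where x="\<lambda>S. p S + q S"]) (auto simp: kdiff_add kchain_add)
qed

lemma kbounds_diff: "f \<in> kbounds scale y A n \<Longrightarrow> g \<in> kbounds scale y A n \<Longrightarrow> (\<lambda>S. f S - g S) \<in> kbounds scale y A n"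
proof -
  assume "f \<in> kbounds scale y A n" "g \<in> kbounds scale y A n"
  then obtain p q where "p \<in> kchain A (Suc n)" "q \<in> kchain A (Suc n)" "f = kdiff scale y A p" "g = kdiff scale y A q"
    by (auto simp: kbounds_def)
  thus ?thesis unfolding kbounds_def
    by (intro image_eqI[where x="\<lambda>S. p S - q S"]) (auto simp: kdiff_diff kchain_diff)
qed

lemma class_eq_D:
  assumes "kclass scale y A n a = kclass scale y A n b"
  shows "(\<lambda>S. a S - b S) \<in> kbounds scale y A n"
proof -
  have "a \<in> kclass scale y A n a" unfolding kclass_def using zero_kbounds by force
  then obtain e where e: "e \<in> kbounds scale y A n" "a = (\<lambda>S. b S + e S)"
    using assms unfolding kclass_def by auto
  hence "(\<lambda>S. a S - b S) = e" by auto
  thus ?thesis using e by simp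
qed

lemma class_eq_I:
  assumes "(\<lambda>S. a S - b S) \<in> kbounds scale y A n"
  shows "kclass scale y A n a = kclass scale y A n b"
proof -
  have *: "kclass scale y A n p \<subseteq> kclass scale y A n q"
    if h: "(\<lambda>S. p S - q S) \<in> kbounds scale y A n" for p q
  proof
    fix x assume "x \<in> kclass scale y A n p"
    then obtain e where e: "e \<in> kbounds scale y A n" "x = (\<lambda>S. p S + e S)" unfolding kclass_def by auto
    have "(\<lambda>S. (p S - q S) + e S) \<in> kbounds scale y A n" using kbounds_add[OF h e(1)] by simp
    moreover have "x = (\<lambda>S. q S + ((p S - q S) + e S))" using e by (simp add: algebra_simps)
    ultimately show "x \<in> kclass scale y A n q" unfolding kclass_def
      by (intro CollectI exI[where x="\<lambda>S. p S - q S + e S"]) simp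
  qed
  have "(\<lambda>S. b S - a S) \<in> kbounds scale y A n"
    using kbounds_diff[OF zero_kbounds assms] by simp
  hence "kclass scale y A n b \<subseteq> kclass scale y A n a" by (rule *)
  with *[OF assms] show ?thesis by (rule subset_antisym)
qed



lemma kpart_kdiff:
  assumes "finite A" "k \<in> A"
  shows "kpart scale k A (kdiff scale y A c) = kdiff scale y (A-{k}) (kpart scale k A c)"
proof
  fix T
  show "kpart scale k A (kdiff scale y A c) T = kdiff scale y (A-{k}) (kpart scale k A c) T"
  proof (cases "T \<subseteq> A - {k}")
    case False
    thus ?thesis by (subst kdiff_outside') (auto simp: kpart_def)
  next
    case True
    have fT: "finite T" using True assms finite_subset by blast
    have e: "A - insert k T = A - {k} - T" by auto
    have "kpart scale k A (kdiff scale y A c) T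
       = (\<Sum>l\<in>A - {k} - T. scale ((-1) ^ card {m\<in>T. k < m} * ((-1) ^ card {m\<in>insert k T. m < l} * y l))
            (c (insert l (insert k T))))"
      using True by (simp add: kpart_def kdiff_def e scale_sum_right)
    also have "\<dots> = (\<Sum>l\<in>A - {k} - T. scale ((-1) ^ card {m\<in>T. m < l} * y l)
            (kpart scale k A c (insert l T)))"
    proof (rule sum.cong[OF refl])
      fix l assume l: "l \<in> A - {k} - T"
      have c1: "card {m\<in>insert k T. m < l} = card {m\<in>T. m < l} + (if k < l then 1 else 0)"
        using True fT by (intro card_insert_less) auto
      have c2: "card {m\<in>insert l T. k < m} = card {m\<in>T. k < m} + (if k < l then 1 else 0)"
        using l fT by (intro card_insert_less) auto
      have sub: "insert l T \<subseteq> A - {k}" using l True by auto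
      have kp: "kpart scale k A c (insert l T) = scale ((-1) ^ card {m\<in>insert l T. k < m}) (c (insert k (insert l T)))"
        using sub by (simp add: kpart_def)
      have ic: "insert l (insert k T) = insert k (insert l T)" by blast
      have sc: "(-1::'a)^s * ((-1)^(a+e) * yl) = (-1)^a * yl * (-1)^(s+e)" for s a e yl
        by (simp add: power_add mult_ac)
      show "scale ((-1) ^ card {m\<in>T. k < m} * ((-1) ^ card {m\<in>insert k T. m < l} * y l))
            (c (insert l (insert k T))) = scale ((-1) ^ card {m\<in>T. m < l} * y l)
            (kpart scale k A c (insert l T))"
        unfolding kp c1 c2 ic scale_scale sc ..
    qed
    also have "\<dots> = kdiff scale y (A-{k}) (kpart scale k A c) T" by (simp add: kdiff_def)
    finally show ?thesis .
  qed
qed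





lemma class_zero_D:
  assumes "kclass scale y A n z = kclass scale y A n (\<lambda>_. 0)"
  shows "z \<in> kbounds scale y A n"
  using class_eq_D[OF assms] by simp

lemma descend:
  assumes hyp: "\<forall>A s. A \<subseteq> {1..r} \<and> (\<forall>a\<in>A. a < s) \<and> 1 \<le> s \<and> s \<le> r \<longrightarrow>
           (\<forall>z \<in> kcycles scale y A i.
              kclass scale y A i (\<lambda>S. scale (y s) (z S)) = kclass scale y A i (\<lambda>_. 0))"
    and C: "finite C" "C \<subseteq> {1..r}" "j \<in> C" "\<forall>a\<in>C-{j}. a < j"
    and x: "x \<in> kchain (C-{j}) i" "x \<in> kbounds scale y C i"
  shows "x \<in> kbounds scale y (C-{j}) i"
proof -
  define C' where "C' = C - {j}"
  obtain v where v: "v \<in> kchain C (Suc i)" "x = kdiff scale y C v"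
    using x(2) unfolding kbounds_def by auto
  define v1 where "v1 = (\<lambda>T. if T \<subseteq> C' then v (insert j T) else 0)"
  have v1c: "v1 \<in> kchain C' i"
    unfolding kchain_def
  proof (intro CollectI allI impI)
    fix T assume h: "v1 T \<noteq> 0"
    hence T: "T \<subseteq> C'" unfolding v1_def by meson
    hence "v (insert j T) \<noteq> 0" using h unfolding v1_def by simp
    hence c1: "card (insert j T) = Suc i" and c2: "finite T"
      using kchain_fin[OF v(1), of "insert j T"] by auto
    have "j \<notin> T" using T unfolding C'_def by auto
    hence "card T = i" using c1 c2 by simp
    thus "T \<subseteq> C' \<and> card T = i" using T by simp
  qed
  have v1d: "kdiff scale y C' v1 = (\<lambda>_. 0)"
  proof
    fix T show "kdiff scale y C' v1 T = 0"
    proof (cases "T \<subseteq> C'")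
      case True
      have "kdiff scale y C' v1 T = kdiff scale y C' (\<lambda>S. v (insert j S)) T"
        using True by (intro kdiff_cong) (auto simp: v1_def)
      also have "\<dots> = kdiff scale y C v (insert j T)"
        using kdiff_split_max2[OF C(1,3,4)] True unfolding C'_def by simp
      also have "\<dots> = x (insert j T)" using v by simp
      also have "\<dots> = 0" using x(1) unfolding kchain_def by auto
      finally show ?thesis .
    next
      case False thus ?thesis using v1c by (rule kdiff_outside[rotated])
    qed
  qed
  have "v1 \<in> kcycles scale y C' i" using v1c v1d by (simp add: kcycles_def)
  moreover have "C' \<subseteq> {1..r} \<and> (\<forall>a\<in>C'. a < j) \<and> 1 \<le> j \<and> j \<le> r"
    using C unfolding C'_def by auto
  ultimately have "kclass scale y C' i (\<lambda>S. scale (y j) (v1 S)) = kclass scale y C' i (\<lambda>_. 0)"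
    using hyp by blast
  hence "(\<lambda>S. scale (y j) (v1 S)) \<in> kbounds scale y C' i" by (rule class_zero_D)
  then obtain q where q: "q \<in> kchain C' (Suc i)" "(\<lambda>S. scale (y j) (v1 S)) = kdiff scale y C' q"
    unfolding kbounds_def by auto
  define v0 where "v0 = (\<lambda>S. if S \<subseteq> C' then v S else 0)"
  have v0c: "v0 \<in> kchain C' (Suc i)"
    using v(1) unfolding kchain_def v0_def by auto
  define p where "p = (\<lambda>S. v0 S + scale ((-1)^i) (q S))"
  have pc: "p \<in> kchain C' (Suc i)" unfolding p_def by (intro kchain_add kchain_scale v0c q(1))
  have "x = kdiff scale y C' p"
  proof
    fix T show "x T = kdiff scale y C' p T"
    proof (cases "T \<subseteq> C'")
      case True
      have fT: "finite T" using True C(1) unfolding C'_def using finite_subset by blast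
      have "kdiff scale y C' p T = kdiff scale y C' v0 T + scale ((-1)^i) (kdiff scale y C' q T)"
        unfolding p_def kdiff_add kdiff_scale ..
      also have "kdiff scale y C' v0 T = kdiff scale y C' v T"
        using True by (intro kdiff_cong) (auto simp: v0_def)
      also have "kdiff scale y C' q T = scale (y j) (v (insert j T))"
        using fun_cong[OF q(2), of T] True by (simp add: v1_def)
      also have "scale ((-1)^i) (scale (y j) (v (insert j T))) = scale ((-1)^card T * y j) (v (insert j T))"
      proof (cases "v (insert j T) = 0")
        case False
        hence "card (insert j T) = Suc i" using kchain_fin[OF v(1), of "insert j T"] by simp
        moreover have "j \<notin> T" using True unfolding C'_def by auto
        ultimately have "card T = i" using fT by simp
        thus ?thesis by simp
      qed simp
      also have "kdiff scale y C' v T + scale ((-1)^card T * y j) (v (insert j T)) = kdiff scale y C v T"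
        using kdiff_split_max[OF C(1,3,4)] True unfolding C'_def by simp
      finally show ?thesis using v(2) by simp
    next
      case False
      have "x T = 0" using x(1) False unfolding kchain_def C'_def by auto
      moreover have "kdiff scale y C' p T = 0" using pc False by (rule kdiff_outside)
      ultimately show ?thesis by simp
    qed
  qed
  thus ?thesis using pc unfolding kbounds_def C'_def by auto
qed




lemma core:
  assumes hyp: "\<forall>A s. A \<subseteq> {1..r} \<and> (\<forall>a\<in>A. a < s) \<and> 1 \<le> s \<and> s \<le> r \<longrightarrow>
           (\<forall>z \<in> kcycles scale y A i.
              kclass scale y A i (\<lambda>S. scale (y s) (z S)) = kclass scale y A i (\<lambda>_. 0))"
  shows "finite A \<Longrightarrow> card A = n \<Longrightarrow> A \<subseteq> {1..r} \<Longrightarrow> z \<in> kchain A (Suc i) \<Longrightarrow>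
     kdiff scale y A z = (\<lambda>_. 0) \<Longrightarrow> (\<And>k. k \<in> A \<Longrightarrow> kpart scale k A z \<in> kbounds scale y (A-{k}) i)
     \<Longrightarrow> z \<in> kbounds scale y A (Suc i)"
proof (induction n arbitrary: A z)
  case 0
  hence A0: "A = {}" by simp
  have "z = (\<lambda>_. 0)"
  proof
    fix S show "z S = 0"
    proof (rule ccontr)
      assume "z S \<noteq> 0"
      hence "S \<subseteq> A \<and> card S = Suc i" using 0(4) unfolding kchain_def by blast
      hence "S = {}" "card S = Suc i" using A0 by auto
      thus False by simp
    qed
  qed
  thus "z \<in> kbounds scale y A (Suc i)" using zero_kbounds by simp
next
  case (Suc n A z)
  note fA = Suc.prems(1) and cA = Suc.prems(2) and Ar = Suc.prems(3) and zc = Suc.prems(4)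
    and zd = Suc.prems(5) and zp = Suc.prems(6)
  {
    have ne: "A \<noteq> {}" using cA by auto
    define j where "j = Max A"
    have jA: "j \<in> A" unfolding j_def using fA ne by simp
    have jmax: "\<forall>a\<in>A-{j}. a < j"
    proof
      fix a assume a: "a \<in> A - {j}"
      hence "a \<le> j" unfolding j_def using Max_ge[OF fA] by blast
      thus "a < j" using a by auto
    qed
    define A' where "A' = A - {j}"
    have fA': "finite A'" and cA': "card A' = n" and A'r: "A' \<subseteq> {1..r}" and A'A: "A' \<subseteq> A"
      using fA cA Ar jA unfolding A'_def by auto
    obtain w where w: "w \<in> kchain A' (Suc i)" "kpart scale j A z = kdiff scale y A' w"
      using zp[OF jA] unfolding kbounds_def A'_def by auto
    have kpj: "kpart scale j A z T = z (insert j T)" if "T \<subseteq> A'" for T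
    proof -
      have TA: "T \<subseteq> A - {j}" using that unfolding A'_def .
      have "\<not> j < k" if k: "k \<in> T" for k
      proof -
        have "k \<in> A - {j}" using TA k by blast
        hence "k < j" using jmax by blast
        thus ?thesis by simp
      qed
      hence e: "{k\<in>T. j < k} = {}" by blast
      show ?thesis unfolding kpart_def if_P[OF TA] e by simp
    qed
    define u where "u = (\<lambda>S. if j \<in> S then w (S - {j}) else 0)"
    have uc: "u \<in> kchain A (Suc (Suc i))"
      unfolding kchain_def
    proof (intro CollectI allI impI)
      fix S assume hS: "u S \<noteq> 0"
      hence jS: "j \<in> S" unfolding u_def by meson
      hence "w (S - {j}) \<noteq> 0" using hS unfolding u_def by simp
      hence "S - {j} \<subseteq> A' \<and> card (S - {j}) = Suc i \<and> finite (S - {j})" using kchain_fin[OF w(1)] by blast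
      hence s1: "S - {j} \<subseteq> A'" and s2: "card (S - {j}) = Suc i" and s3: "finite (S - {j})" by auto
      have fS: "finite S" using s3 by simp
      have "S \<subseteq> A" using s1 jS jA A'A by auto
      moreover have "card S = Suc (card (S - {j}))" using card_Suc_Diff1[OF fS jS] by simp
      ultimately show "S \<subseteq> A \<and> card S = Suc (Suc i)" using s2 by simp
    qed
    define du where "du = kdiff scale y A u"
    have duc: "du \<in> kchain A (Suc i)" unfolding du_def by (rule kdiff_chain[OF uc])
    have du_j: "du (insert j T) = z (insert j T)" if T: "T \<subseteq> A'" for T
    proof -
      have "du (insert j T) = kdiff scale y A' (\<lambda>S. u (insert j S)) T"
        unfolding du_def A'_def using kdiff_split_max2[OF fA jA jmax] T unfolding A'_def by simp
      also have "\<dots> = kdiff scale y A' w T"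
      proof (rule kdiff_cong[OF _ T])
        fix S assume "S \<subseteq> A'"
        hence "j \<notin> S" unfolding A'_def by auto
        thus "u (insert j S) = w S" unfolding u_def by simp
      qed
      also have "\<dots> = z (insert j T)" using fun_cong[OF w(2), of T] kpj[OF T] by simp
      finally show ?thesis .
    qed
    have du_o: "du S = scale ((-1)^card S * y j) (w S)" if S: "S \<subseteq> A'" for S
    proof -
      have "du S = kdiff scale y A' u S + scale ((-1)^card S * y j) (u (insert j S))"
        unfolding du_def using kdiff_split_max[OF fA jA jmax] S unfolding A'_def by simp
      also have "kdiff scale y A' u S = kdiff scale y A' (\<lambda>_. 0) S"
      proof (rule kdiff_cong[OF _ S])
        fix S' assume "S' \<subseteq> A'"
        hence "j \<notin> S'" unfolding A'_def by auto
        thus "u S' = 0" unfolding u_def by simp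
      qed
      also have "\<dots> = 0" by (simp add: kdiff_zero)
      also have "u (insert j S) = w S"
      proof -
        have "j \<notin> S" using S unfolding A'_def by blast
        thus ?thesis unfolding u_def by simp
      qed
      finally show ?thesis by simp
    qed
    define z' where "z' = (\<lambda>S. z S - du S)"
    have z'c: "z' \<in> kchain A' (Suc i)"
      unfolding kchain_def
    proof (intro CollectI allI impI)
      fix S assume hS: "z' S \<noteq> 0"
      have "z S \<noteq> 0 \<or> du S \<noteq> 0" using hS unfolding z'_def by auto
      hence SA: "S \<subseteq> A \<and> card S = Suc i" using zc duc unfolding kchain_def by blast
      have "j \<notin> S"
      proof
        assume jS: "j \<in> S"
        have "S - {j} \<subseteq> A'" using SA unfolding A'_def by auto
        from du_j[OF this] have "du S = z S" using jS by (simp add: insert_absorb)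
        thus False using hS unfolding z'_def by simp
      qed
      thus "S \<subseteq> A' \<and> card S = Suc i" using SA unfolding A'_def by auto
    qed
    have z'd: "kdiff scale y A' z' = (\<lambda>_. 0)"
    proof
      fix T show "kdiff scale y A' z' T = 0"
      proof (cases "T \<subseteq> A'")
        case False thus ?thesis using z'c by (rule kdiff_outside[rotated])
      next
        case True
        have fT: "finite T" using True fA' finite_subset by blast
        have "kdiff scale y A' z' T = kdiff scale y A' (\<lambda>S. z S - scale ((-1)^Suc i * y j) (w S)) T"
        proof (rule kdiff_cong[OF _ True])
          fix S assume S: "S \<subseteq> A'"
          have "scale ((-1)^card S * y j) (w S) = scale ((-1)^Suc i * y j) (w S)"
          proof (cases "w S = 0")
            case False
            hence "card S = Suc i" using kchain_fin[OF w(1)] by blast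
            thus ?thesis by simp
          qed simp
          thus "z' S = z S - scale ((-1)^Suc i * y j) (w S)" unfolding z'_def using du_o[OF S] by simp
        qed
        also have "\<dots> = kdiff scale y A' z T - scale ((-1)^Suc i * y j) (kdiff scale y A' w T)"
          unfolding kdiff_diff kdiff_scale ..
        also have "kdiff scale y A' w T = z (insert j T)" using fun_cong[OF w(2), of T] kpj[OF True] by simp
        also have "kdiff scale y A' z T = - scale ((-1)^card T * y j) (z (insert j T))"
        proof -
          have "kdiff scale y A z T = kdiff scale y A' z T + scale ((-1)^card T * y j) (z (insert j T))"
            using kdiff_split_max[OF fA jA jmax] True unfolding A'_def by simp
          thus ?thesis using zd by (simp add: eq_neg_iff_add_eq_0)
        qed
        also have "scale ((-1)^card T * y j) (z (insert j T)) = scale ((-1)^i * y j) (z (insert j T))"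
        proof (cases "z (insert j T) = 0")
          case False
          hence "card (insert j T) = Suc i" using kchain_fin[OF zc, of "insert j T"] by simp
          moreover have "j \<notin> T" using True unfolding A'_def by auto
          ultimately have "card T = i" using fT by simp
          thus ?thesis by simp
        qed simp
        finally show ?thesis by simp
      qed
    qed
    have z'p: "kpart scale k A' z' \<in> kbounds scale y (A'-{k}) i" if kA': "k \<in> A'" for k
    proof -
      have kA: "k \<in> A" and kj: "k \<noteq> j" using kA' unfolding A'_def by auto
      obtain v where v: "v \<in> kchain (A-{k}) (Suc i)" "kpart scale k A z = kdiff scale y (A-{k}) v"
        using zp[OF kA] unfolding kbounds_def by auto
      have pdu: "kpart scale k A du = kdiff scale y (A-{k}) (kpart scale k A u)"
        unfolding du_def by (rule kpart_kdiff[OF fA kA])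
      have puc: "kpart scale k A u \<in> kchain (A-{k}) (Suc i)" by (rule kpart_chain[OF uc])
      have X: "kpart scale k A' z' = kdiff scale y (A-{k}) (\<lambda>S. v S - kpart scale k A u S)"
      proof
        fix T
        have "kpart scale k A' z' T = kpart scale k A z' T" using kpart_mono[OF z'c A'A] by simp
        also have "\<dots> = kpart scale k A z T - kpart scale k A du T" unfolding z'_def kpart_diff ..
        also have "\<dots> = kdiff scale y (A-{k}) (\<lambda>S. v S - kpart scale k A u S) T"
          unfolding kdiff_diff v(2) pdu ..
        finally show "kpart scale k A' z' T = kdiff scale y (A-{k}) (\<lambda>S. v S - kpart scale k A u S) T" .
      qed
      have Xb: "kpart scale k A' z' \<in> kbounds scale y (A-{k}) i"
        unfolding X kbounds_def using kchain_diff[OF v(1) puc] by blast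
      have e: "A - {k} - {j} = A' - {k}" unfolding A'_def by auto
      have Xc: "kpart scale k A' z' \<in> kchain (A - {k} - {j}) i" unfolding e by (rule kpart_chain[OF z'c])
      have d1: "finite (A-{k})" "A-{k} \<subseteq> {1..r}" "j \<in> A-{k}" using fA Ar jA kj by auto
      have d2: "\<forall>a\<in>A-{k}-{j}. a < j" using jmax by blast
      have "kpart scale k A' z' \<in> kbounds scale y (A - {k} - {j}) i"
        by (rule descend[OF hyp d1 d2 Xc Xb])
      thus ?thesis unfolding e .
    qed
    have "z' \<in> kbounds scale y A' (Suc i)" by (rule Suc.IH[OF fA' cA' A'r z'c z'd z'p])
    then obtain q where q: "q \<in> kchain A' (Suc (Suc i))" "z' = kdiff scale y A' q"
      unfolding kbounds_def by auto
    have "z = (\<lambda>S. z' S + du S)" unfolding z'_def by simp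
    also have "\<dots> = kdiff scale y A (\<lambda>S. q S + u S)"
      unfolding kdiff_add q(2) du_def kdiff_restrict[OF fA A'A q(1)] ..
    finally have "z \<in> kbounds scale y A (Suc i)"
      unfolding kbounds_def using kchain_add[OF kchain_mono[OF q(1) A'A] uc] by blast
  }
  thus ?case .
qed


end

theorem lemma2p1:
  fixes scale :: "'a::comm_ring_1 \<Rightarrow> 'b::ab_group_add \<Rightarrow> 'b"
    and y :: "nat \<Rightarrow> 'a" and r i :: nat
  assumes "module scale"
    and "0 < i"
    and "\<forall>A s. A \<subseteq> {1..r} \<and> (\<forall>a\<in>A. a < s) \<and> 1 \<le> s \<and> s \<le> r \<longrightarrow>
           (\<forall>z \<in> kcycles scale y A i.
              kclass scale y A i (\<lambda>S. scale (y s) (z S)) = kclass scale y A i (\<lambda>_. 0))"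
  shows "\<forall>A. A \<subseteq> {1..r} \<longrightarrow> inj_on (kbd scale y A i) (khom scale y A (Suc i))"
proof (intro allI impI)
  fix A assume Ar: "A \<subseteq> {1..r}"
  have fA: "finite A" using Ar finite_subset by blast
  show "inj_on (kbd scale y A i) (khom scale y A (Suc i))"
  proof (rule inj_onI)
    fix h1 h2
    assume h1: "h1 \<in> khom scale y A (Suc i)" and h2: "h2 \<in> khom scale y A (Suc i)"
      and eq: "kbd scale y A i h1 = kbd scale y A i h2"
    define P where "P h z \<longleftrightarrow> z \<in> kcycles scale y A (Suc i) \<and> kclass scale y A (Suc i) z = h" for h z
    have ex1: "\<exists>z. P h1 z" using h1 unfolding khom_def P_def by auto
    have ex2: "\<exists>z. P h2 z" using h2 unfolding khom_def P_def by auto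
    define z1 where "z1 = (SOME z. P h1 z)"
    define z2 where "z2 = (SOME z. P h2 z)"
    have z1: "P h1 z1" unfolding z1_def by (rule someI_ex[OF ex1])
    have z2: "P h2 z2" unfolding z2_def by (rule someI_ex[OF ex2])
    have kc: "kconn scale y A i k h = kclass scale y (A-{k}) i (kpart scale k A (SOME z. P h z))" for k h
      unfolding kconn_def P_def by simp
    define d where "d = (\<lambda>S. z1 S - z2 S)"
    have dc: "d \<in> kchain A (Suc i)" unfolding d_def
      using z1 z2 unfolding P_def kcycles_def by (intro module.kchain_diff[OF assms(1)]) auto
    have dd: "kdiff scale y A d = (\<lambda>_. 0)"
    proof
      fix T show "kdiff scale y A d T = 0"
        using z1 z2 unfolding d_def P_def kcycles_def module.kdiff_diff[OF assms(1)] by simp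
    qed
    have dp: "kpart scale k A d \<in> kbounds scale y (A-{k}) i" if k: "k \<in> A" for k
    proof -
      have "kbd scale y A i h1 k = kbd scale y A i h2 k" using eq by simp
      hence "kclass scale y (A-{k}) i (kpart scale k A z1) = kclass scale y (A-{k}) i (kpart scale k A z2)"
        using k unfolding kbd_def kc z1_def z2_def by simp
      hence "(\<lambda>S. kpart scale k A z1 S - kpart scale k A z2 S) \<in> kbounds scale y (A-{k}) i"
        by (rule module.class_eq_D[OF assms(1)])
      moreover have "kpart scale k A d = (\<lambda>S. kpart scale k A z1 S - kpart scale k A z2 S)"
        unfolding d_def using module.kpart_diff[OF assms(1)] by blast
      ultimately show ?thesis by simp
    qed
    have "d \<in> kbounds scale y A (Suc i)"
      by (rule module.core[OF assms(1) assms(3) fA refl Ar dc dd dp])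
    hence "kclass scale y A (Suc i) z1 = kclass scale y A (Suc i) z2"
      unfolding d_def by (rule module.class_eq_I[OF assms(1)])
    thus "h1 = h2" using z1 z2 unfolding P_def by simp
  qed
qed

end
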